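(* Let $\Sigma=\{a,b,c\}$ and let $L_\infty\subseteq\mathcal{T}_\Sigma$ be the set of $\Sigma$-trees $t$ such that on every infinite branch of $t$ the letter $a$ occurs infinitely often. Then $L_\infty$ is comeager in $\mathcal{T}_\Sigma$.
   Context: The full binary tree is $V=\{L,R\}^*$; a $\Sigma$-tree is a map $t:V\to\Sigma$ and $\mathcal{T}_\Sigma=\Sigma^V$ with the product topology ($\Sigma$ discrete). An infinite branch is an infinite sequence of vertices $\epsilon, d_1, d_1d_2,\dots$ with $d_j\in\{L,R\}$. A set is comeager if its complement is a countable union of nowhere dense sets. *)

theory Defs
  imports "HOL-Analysis.Analysis"
begin

datatype dir = L | R

type_synonym vertex = "dir list"

datatype sigma = a | b | c

definition tree_top :: "(vertex \<Rightarrow> sigma) topology" where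
  "tree_top = product_topology (\<lambda>v. discrete_topology (UNIV :: sigma set)) UNIV"

definition nowhere_dense_in :: "'x topology \<Rightarrow> 'x set \<Rightarrow> bool" where
  "nowhere_dense_in X S \<longleftrightarrow> S \<subseteq> topspace X \<and> X interior_of (X closure_of S) = {}"

definition comeager_in :: "'x topology \<Rightarrow> 'x set \<Rightarrow> bool" where
  "comeager_in X A \<longleftrightarrow> A \<subseteq> topspace X \<and>
     (\<exists>N :: nat \<Rightarrow> 'x set. (\<forall>n. nowhere_dense_in X (N n)) \<and>
        topspace X - A = (\<Union>n. N n))"

definition branch_vertex :: "(nat \<Rightarrow> dir) \<Rightarrow> nat \<Rightarrow> vertex" where
  "branch_vertex d n = map d [0..<n]"

definition L_inf :: "(vertex \<Rightarrow> sigma) set" where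
  "L_inf = {t. \<forall>d :: nat \<Rightarrow> dir. \<exists>\<^sub>\<infinity>n. t (branch_vertex d n) = a}"

end

theory Submission
  imports Defs
begin

instance dir :: countable by countable_datatype

definition Dset :: "vertex \<Rightarrow> (vertex \<Rightarrow> sigma) set" where
  "Dset u = {t. \<forall>k. \<exists>w::dir list. length w = k \<and> (\<forall>j\<le>k. t (u @ take j w) \<noteq> a)}"

lemma top_UNIV: "topspace tree_top = UNIV"
  by (simp add: tree_top_def topspace_product_topology)

lemma closed_coord: "closedin tree_top {t. t v \<noteq> a}"
proof -
  have cm: "continuous_map tree_top (discrete_topology (UNIV::sigma set)) (\<lambda>t. t v)"
    unfolding tree_top_def by (rule continuous_map_product_projection) simp
  have "closedin tree_top {x \<in> topspace tree_top. x v \<in> UNIV - {a}}"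
    by (rule closedin_continuous_map_preimage[OF cm]) simp
  then show ?thesis by (simp add: top_UNIV)
qed

lemma finite_dir: "finite (UNIV :: dir set)"
proof -
  have "x \<in> {L, R}" for x by (cases x) auto
  then have "UNIV = {L, R}" by blast
  then show ?thesis by (metis finite.emptyI finite.insertI)
qed

lemma finite_len: "finite {w::dir list. length w = k}"
  using finite_lists_length_eq[OF finite_dir, of k] by simp

lemma closed_D: "closedin tree_top (Dset u)"
proof -
  have eq: "Dset u = (\<Inter>k. \<Union>w\<in>{w::dir list. length w = k}. \<Inter>j\<in>{..k}. {t. t (u @ take j w) \<noteq> a})"
    unfolding Dset_def
  proof (rule set_eqI, rule iffI)
    fix t assume H: "t \<in> {t. \<forall>k. \<exists>w::dir list. length w = k \<and> (\<forall>j\<le>k. t (u @ take j w) \<noteq> a)}"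
    show "t \<in> (\<Inter>k. \<Union>w\<in>{w::dir list. length w = k}. \<Inter>j\<in>{..k}. {t. t (u @ take j w) \<noteq> a})"
    proof (rule INT_I)
      fix k :: nat
      from H obtain w :: "dir list" where w: "length w = k" "\<forall>j\<le>k. t (u @ take j w) \<noteq> a" by auto
      show "t \<in> (\<Union>w\<in>{w::dir list. length w = k}. \<Inter>j\<in>{..k}. {t. t (u @ take j w) \<noteq> a})"
        by (rule UN_I[of w]) (use w in auto)
    qed
  next
    fix t assume "t \<in> (\<Inter>k. \<Union>w\<in>{w::dir list. length w = k}. \<Inter>j\<in>{..k}. {t. t (u @ take j w) \<noteq> a})"
    show "t \<in> {t. \<forall>k. \<exists>w::dir list. length w = k \<and> (\<forall>j\<le>k. t (u @ take j w) \<noteq> a)}"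
    proof (intro CollectI allI)
      fix k :: nat
      from INT_D[OF \<open>t \<in> _\<close>, of k] obtain w where
        w: "w \<in> {w::dir list. length w = k}" "t \<in> (\<Inter>j\<in>{..k}. {t. t (u @ take j w) \<noteq> a})"
        by (rule UN_E) simp
      show "\<exists>w::dir list. length w = k \<and> (\<forall>j\<le>k. t (u @ take j w) \<noteq> a)"
        by (rule exI[of _ w]) (use w in auto)
    qed
  qed
  have c1: "closedin tree_top (\<Inter>j\<in>{..k}. {t. t (u @ take j w) \<noteq> a})" for k w
    by (rule closedin_Inter) (auto simp: closed_coord)
  have c2: "closedin tree_top (\<Union>w\<in>{w::dir list. length w = k}. \<Inter>j\<in>{..k}. {t. t (u @ take j w) \<noteq> a})" for k
    by (rule closedin_Union) (auto simp: finite_len c1)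
  show ?thesis unfolding eq
    by (rule closedin_Inter) (auto simp: c2)
qed

lemma interior_D: "tree_top interior_of (Dset u) = {}"
proof (rule ccontr)
  assume "tree_top interior_of (Dset u) \<noteq> {}"
  then obtain t where t: "t \<in> tree_top interior_of (Dset u)" by blast
  define W where "W = tree_top interior_of (Dset u)"
  have W: "openin tree_top W" "t \<in> W" "W \<subseteq> Dset u"
    using t by (simp_all add: W_def interior_of_subset)
  then obtain U where U: "finite {i. U i \<noteq> topspace (discrete_topology (UNIV::sigma set))}"
     "t \<in> Pi\<^sub>E UNIV U" "Pi\<^sub>E UNIV U \<subseteq> W"
  proof -
    have "openin (product_topology (\<lambda>v. discrete_topology (UNIV :: sigma set)) UNIV) W"
      using W(1) by (simp add: tree_top_def)
    then have "\<forall>x\<in>W. \<exists>U. finite {i \<in> UNIV. U i \<noteq> topspace (discrete_topology (UNIV::sigma set))} \<and>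
         (\<forall>i\<in>UNIV. openin (discrete_topology UNIV) (U i)) \<and> x \<in> Pi\<^sub>E UNIV U \<and> Pi\<^sub>E UNIV U \<subseteq> W"
      by (simp only: openin_product_topology_alt)
    from bspec[OF this W(2)] obtain U where "finite {i \<in> UNIV. U i \<noteq> topspace (discrete_topology (UNIV::sigma set))}"
         "t \<in> Pi\<^sub>E UNIV U" "Pi\<^sub>E UNIV U \<subseteq> W"
      by (elim exE conjE)
    then show ?thesis by (intro that) simp_all
  qed
  define F where "F = {i. U i \<noteq> UNIV}"
  have fF: "finite F" using U(1) by (simp add: F_def)
  define k where "k = Max (insert 0 (length ` F)) + 1"
  have kF: "\<And>v. v \<in> F \<Longrightarrow> length v < k"
    unfolding k_def using fF by (simp add: le_imp_less_Suc)
  define s where "s v = (if v \<in> F then t v else a)" for v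
  have "s v \<in> U v" for v
  proof (cases "v \<in> F")
    case True
    then show ?thesis using U(2) by (simp add: s_def PiE_iff)
  next
    case False
    then show ?thesis by (simp add: s_def F_def)
  qed
  then have "s \<in> Pi\<^sub>E UNIV U" by (simp add: PiE_iff)
  then have "s \<in> Dset u" using U(3) W(3) by (meson subsetD)
  then have "\<exists>w::dir list. length w = k \<and> (\<forall>j\<le>k. s (u @ take j w) \<noteq> a)"
    unfolding Dset_def by simp
  then obtain w where w: "length w = k" "\<forall>j\<le>k. s (u @ take j w) \<noteq> a"
    by (elim exE conjE)
  have "s (u @ take k w) \<noteq> a" using w(2) by simp
  then have "s (u @ w) \<noteq> a" using w(1) by simp
  moreover have "u @ w \<notin> F"
  proof
    assume "u @ w \<in> F"
    then have "length (u @ w) < k" by (rule kF)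
    with w(1) show False by simp
  qed
  then have "s (u @ w) = a" by (simp add: s_def)
  ultimately show False by contradiction
qed

lemma nd: "nowhere_dense_in tree_top (Dset u - L_inf)"
proof -
  have "tree_top closure_of (Dset u - L_inf) \<subseteq> Dset u"
    by (rule closure_of_minimal) (auto simp: closed_D)
  then have "tree_top interior_of (tree_top closure_of (Dset u - L_inf)) \<subseteq> {}"
    using interior_of_mono[OF \<open>_ \<subseteq> Dset u\<close>, of tree_top] interior_D by simp
  then show ?thesis unfolding nowhere_dense_in_def by (simp add: top_UNIV)
qed

lemma bv_split: "j \<le> k \<Longrightarrow> branch_vertex d m @ take j (map (\<lambda>i. d (m+i)) [0..<k]) = branch_vertex d (m+j)"
proof -
  assume "j \<le> k"
  then have "take j (map (\<lambda>i. d (m+i)) [0..<k]) = map (\<lambda>i. d (m+i)) [0..<j]"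
    by (simp add: take_map)
  moreover have "map d [0..<m+j] = map d [0..<m] @ map (\<lambda>i. d (m+i)) [0..<j]"
    by (rule nth_equalityI) (auto simp: nth_append)
  ultimately show ?thesis by (simp add: branch_vertex_def)
qed

lemma compl_sub: "t \<notin> L_inf \<Longrightarrow> \<exists>u. t \<in> Dset u"
proof -
  assume "t \<notin> L_inf"
  then obtain d where "\<not> (\<exists>\<^sub>\<infinity>n. t (branch_vertex d n) = a)" unfolding L_inf_def by blast
  then obtain m where m: "\<forall>n\<ge>m. t (branch_vertex d n) \<noteq> a"
    unfolding INFM_nat_le by blast
  have "t \<in> Dset (branch_vertex d m)"
    unfolding Dset_def
  proof (clarify)
    fix k
    show "\<exists>w. length w = k \<and> (\<forall>j\<le>k. t (branch_vertex d m @ take j w) \<noteq> a)"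
      by (rule exI[of _ "map (\<lambda>i. d (m+i)) [0..<k]"]) (simp add: bv_split m)
  qed
  then show ?thesis by blast
qed

theorem proposition5:
  shows "comeager_in tree_top L_inf"
  unfolding comeager_in_def
proof (intro conjI exI[of _ "\<lambda>n. Dset (from_nat n) - L_inf"])
  show "L_inf \<subseteq> topspace tree_top" by (simp add: top_UNIV)
  show "\<forall>n. nowhere_dense_in tree_top (Dset (from_nat n) - L_inf)" using nd by blast
  show "topspace tree_top - L_inf = (\<Union>n. Dset (from_nat n) - L_inf)"
  proof
    show "topspace tree_top - L_inf \<subseteq> (\<Union>n. Dset (from_nat n) - L_inf)"
    proof
      fix t assume "t \<in> topspace tree_top - L_inf"
      then obtain u where "t \<in> Dset u" "t \<notin> L_inf" using compl_sub by blast
      then show "t \<in> (\<Union>n. Dset (from_nat n) - L_inf)"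
        by (metis (no_types, lifting) Diff_iff UN_I UNIV_I from_nat_to_nat)
    qed
  qed (auto simp: top_UNIV)
qed

end
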